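(* Let $S=\mathbb{N}_\wedge$. Then $T=\begin{pmatrix}\ell^{1}(S)^{**}&\ell^{1}(S)^{**}\\0&\ell^{1}(S)^{**}\end{pmatrix}$ is not approximately biprojective.
   Context: $\mathbb{N}_\wedge$ is $\mathbb{N}$ with operation $m\wedge n=\min\{m,n\}$; $\ell^1(S)^{**}$ carries the first Arens product. For a Banach algebra $A$, $T=\begin{pmatrix}A&A\\0&A\end{pmatrix}$ is the algebra of upper triangular matrices with entries in $A$, matrix operations and norm $\|a\|+\|x\|+\|b\|$. A Banach algebra $B$ is approximately biprojective if there is a net $(\rho_\alpha)$ of continuous $B$-bimodule morphisms $B\to B\otimes_pB$ with $\pi_B\circ\rho_\alpha(b)\to b$ for all $b$, where $\pi_B(b\otimes c)=bc$. *)

theory Defs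
  imports "HOL-Analysis.Analysis"
begin

record 'a cbalg =
  ba_carr :: "'a set"
  ba_add  :: "'a \<Rightarrow> 'a \<Rightarrow> 'a"
  ba_smul :: "complex \<Rightarrow> 'a \<Rightarrow> 'a"
  ba_mul  :: "'a \<Rightarrow> 'a \<Rightarrow> 'a"
  ba_nrm  :: "'a \<Rightarrow> real"

text \<open>Bounded complex-bilinear forms on B x B (the dual of the projective tensor product).\<close>
definition bil_forms :: "'a cbalg \<Rightarrow> ('a \<Rightarrow> 'a \<Rightarrow> complex) set" where
  "bil_forms B = {\<phi>.
     (\<forall>x\<in>ba_carr B. \<forall>y\<in>ba_carr B. \<forall>z\<in>ba_carr B. \<forall>c.
        \<phi> (ba_add B x z) y = \<phi> x y + \<phi> z y \<and>
        \<phi> x (ba_add B y z) = \<phi> x y + \<phi> x z \<and>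
        \<phi> (ba_smul B c x) y = c * \<phi> x y \<and>
        \<phi> x (ba_smul B c y) = c * \<phi> x y) \<and>
     (\<exists>K. \<forall>x\<in>ba_carr B. \<forall>y\<in>ba_carr B. cmod (\<phi> x y) \<le> K * ba_nrm B x * ba_nrm B y)}"

definition lin_funcs :: "'a cbalg \<Rightarrow> ('a \<Rightarrow> complex) set" where
  "lin_funcs B = {\<psi>.
     (\<forall>x\<in>ba_carr B. \<forall>y\<in>ba_carr B. \<forall>c.
        \<psi> (ba_add B x y) = \<psi> x + \<psi> y \<and> \<psi> (ba_smul B c x) = c * \<psi> x) \<and>
     (\<exists>K. \<forall>x\<in>ba_carr B. cmod (\<psi> x) \<le> K * ba_nrm B x)}"

text \<open>Elements of the completed projective tensor product are the sums
  \<open>\<Sum> x_n \<otimes> y_n\<close> with \<open>\<Sum> \<parallel>x_n\<parallel>\<parallel>y_n\<parallel> < \<infinity>\<close>; such an element is identified with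
  the functional it induces on bounded bilinear forms (canonical injection into
  the bidual).\<close>
definition tens_rep :: "'a cbalg \<Rightarrow> (nat \<Rightarrow> 'a) \<Rightarrow> (nat \<Rightarrow> 'a) \<Rightarrow> bool" where
  "tens_rep B x y \<longleftrightarrow> (\<forall>n. x n \<in> ba_carr B \<and> y n \<in> ba_carr B) \<and>
     summable (\<lambda>n. ba_nrm B (x n) * ba_nrm B (y n))"

definition tens_of :: "'a cbalg \<Rightarrow> (nat \<Rightarrow> 'a) \<Rightarrow> (nat \<Rightarrow> 'a)
    \<Rightarrow> ('a \<Rightarrow> 'a \<Rightarrow> complex) \<Rightarrow> complex" where
  "tens_of B x y = (\<lambda>\<phi>. if \<phi> \<in> bil_forms B then (\<Sum>n. \<phi> (x n) (y n)) else 0)"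

definition ptens :: "'a cbalg \<Rightarrow> (('a \<Rightarrow> 'a \<Rightarrow> complex) \<Rightarrow> complex) set" where
  "ptens B = {tens_of B x y | x y. tens_rep B x y}"

definition ptnorm :: "'a cbalg \<Rightarrow> (('a \<Rightarrow> 'a \<Rightarrow> complex) \<Rightarrow> complex) \<Rightarrow> real" where
  "ptnorm B u = Inf {(\<Sum>n. ba_nrm B (x n) * ba_nrm B (y n)) | x y.
                       tens_rep B x y \<and> tens_of B x y = u}"

text \<open>Bimodule actions: \<open>a\<cdot>(x\<otimes>y) = (ax)\<otimes>y\<close>, \<open>(x\<otimes>y)\<cdot>a = x\<otimes>(ya)\<close>.\<close>
definition tl_act :: "'a cbalg \<Rightarrow> 'a \<Rightarrow> (('a \<Rightarrow> 'a \<Rightarrow> complex) \<Rightarrow> complex)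
    \<Rightarrow> (('a \<Rightarrow> 'a \<Rightarrow> complex) \<Rightarrow> complex)" where
  "tl_act B a u = (\<lambda>\<phi>. if \<phi> \<in> bil_forms B then u (\<lambda>x y. \<phi> (ba_mul B a x) y) else 0)"

definition tr_act :: "'a cbalg \<Rightarrow> (('a \<Rightarrow> 'a \<Rightarrow> complex) \<Rightarrow> complex) \<Rightarrow> 'a
    \<Rightarrow> (('a \<Rightarrow> 'a \<Rightarrow> complex) \<Rightarrow> complex)" where
  "tr_act B u a = (\<lambda>\<phi>. if \<phi> \<in> bil_forms B then u (\<lambda>x y. \<phi> x (ba_mul B y a)) else 0)"

text \<open>The product map \<open>\<pi>(\<Sum> x_n \<otimes> y_n) = \<Sum> x_n y_n\<close>, characterised weakly
  (bounded functionals separate points).\<close>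
definition tproj :: "'a cbalg \<Rightarrow> (('a \<Rightarrow> 'a \<Rightarrow> complex) \<Rightarrow> complex) \<Rightarrow> 'a" where
  "tproj B u = (THE c. c \<in> ba_carr B \<and>
      (\<forall>\<psi>\<in>lin_funcs B. \<psi> c = u (\<lambda>x y. \<psi> (ba_mul B x y))))"

definition bimod_morph :: "'a cbalg \<Rightarrow> ('a \<Rightarrow> (('a \<Rightarrow> 'a \<Rightarrow> complex) \<Rightarrow> complex)) \<Rightarrow> bool" where
  "bimod_morph B \<rho> \<longleftrightarrow>
     (\<forall>a\<in>ba_carr B. \<rho> a \<in> ptens B) \<and>
     (\<forall>a\<in>ba_carr B. \<forall>b\<in>ba_carr B. \<rho> (ba_add B a b) = (\<lambda>\<phi>. \<rho> a \<phi> + \<rho> b \<phi>)) \<and>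
     (\<forall>a\<in>ba_carr B. \<forall>c. \<rho> (ba_smul B c a) = (\<lambda>\<phi>. c * \<rho> a \<phi>)) \<and>
     (\<exists>K. \<forall>a\<in>ba_carr B. ptnorm B (\<rho> a) \<le> K * ba_nrm B a) \<and>
     (\<forall>a\<in>ba_carr B. \<forall>b\<in>ba_carr B.
        \<rho> (ba_mul B a b) = tl_act B a (\<rho> b) \<and> \<rho> (ba_mul B b a) = tr_act B (\<rho> b) a)"

text \<open>Approximate biprojectivity; the net \<open>(\<rho>_\<alpha>)\<close> is represented by a proper filter
  on maps (nets and filters are interchangeable for convergence).\<close>
definition approx_biprojective :: "'a cbalg \<Rightarrow> bool" where
  "approx_biprojective B \<longleftrightarrow>
     (\<exists>F :: ('a \<Rightarrow> (('a \<Rightarrow> 'a \<Rightarrow> complex) \<Rightarrow> complex)) filter.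
        F \<noteq> bot \<and> eventually (bimod_morph B) F \<and>
        (\<forall>b\<in>ba_carr B.
           ((\<lambda>\<rho>. ba_nrm B (ba_add B (tproj B (\<rho> b)) (ba_smul B (-1) b))) \<longlongrightarrow> 0) F))"

text \<open>\<open>\<ell>\<^sup>\<infinity>(\<nat>) = \<ell>\<^sup>1(\<nat>)\<^sup>*\<close>.\<close>
definition linf :: "(nat \<Rightarrow> complex) set" where
  "linf = {g. bounded (range g)}"

definition supn :: "(nat \<Rightarrow> complex) \<Rightarrow> real" where
  "supn g = (SUP n. cmod (g n))"

text \<open>\<open>\<ell>\<^sup>1(S)\<^sup>*\<^sup>* = \<ell>\<^sup>\<infinity>(S)\<^sup>*\<close>: bounded complex-linear functionals on \<open>\<ell>\<^sup>\<infinity>\<close>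
  (normalised to be 0 off \<open>\<ell>\<^sup>\<infinity>\<close>).\<close>
definition l1bidual :: "((nat \<Rightarrow> complex) \<Rightarrow> complex) set" where
  "l1bidual = {m.
     (\<forall>f\<in>linf. \<forall>g\<in>linf. m (\<lambda>n. f n + g n) = m f + m g) \<and>
     (\<forall>c. \<forall>f\<in>linf. m (\<lambda>n. c * f n) = c * m f) \<and>
     (\<exists>K. \<forall>f\<in>linf. cmod (m f) \<le> K * supn f) \<and>
     (\<forall>f. f \<notin> linf \<longrightarrow> m f = 0)}"

definition bdnorm :: "((nat \<Rightarrow> complex) \<Rightarrow> complex) \<Rightarrow> real" where
  "bdnorm m = (SUP f\<in>{f\<in>linf. supn f \<le> 1}. cmod (m f))"

text \<open>First Arens product on \<open>\<ell>\<^sup>1(\<nat>\<^sub>\<and>)\<^sup>*\<^sup>*\<close>: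
  \<open>\<langle>f\<cdot>\<delta>_s, \<delta>_t\<rangle> = f(s \<and> t)\<close>, \<open>(n\<cdot>f)(s) = n(f\<cdot>\<delta>_s)\<close>, \<open>(m\<box>n)(f) = m(n\<cdot>f)\<close>.\<close>
definition arens :: "((nat \<Rightarrow> complex) \<Rightarrow> complex) \<Rightarrow> ((nat \<Rightarrow> complex) \<Rightarrow> complex)
    \<Rightarrow> ((nat \<Rightarrow> complex) \<Rightarrow> complex)" where
  "arens m n = (\<lambda>f. if f \<in> linf then m (\<lambda>s. n (\<lambda>t. f (min t s))) else 0)"

type_synonym bd = "(nat \<Rightarrow> complex) \<Rightarrow> complex"

text \<open>Upper triangular matrices \<open>(a x; 0 b)\<close> encoded as triples \<open>(a, x, b)\<close>.\<close>
definition T_alg :: "(bd \<times> bd \<times> bd) cbalg" where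
  "T_alg = \<lparr> ba_carr = {(a, x, b). a \<in> l1bidual \<and> x \<in> l1bidual \<and> b \<in> l1bidual},
             ba_add = (\<lambda>(a, x, b) (a', x', b'). (\<lambda>f. a f + a' f, \<lambda>f. x f + x' f, \<lambda>f. b f + b' f)),
             ba_smul = (\<lambda>c (a, x, b). (\<lambda>f. c * a f, \<lambda>f. c * x f, \<lambda>f. c * b f)),
             ba_mul = (\<lambda>(a, x, b) (a', x', b').
                        (arens a a', \<lambda>f. arens a x' f + arens x b' f, arens b b')),
             ba_nrm = (\<lambda>(a, x, b). bdnorm a + bdnorm x + bdnorm b) \<rparr>"

end

theory Submission
  imports Defs
begin


lemma linf_bound: "f \<in> linf \<Longrightarrow> cmod (f n) \<le> supn f"
  unfolding linf_def supn_def
  by (rule cSUP_upper) (auto simp: bounded_iff bdd_above_def)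

lemma linfI: assumes "\<And>n. cmod (f n) \<le> B" shows "f \<in> linf" "supn f \<le> B"
proof -
  show "f \<in> linf" unfolding linf_def bounded_iff using assms by auto
  show "supn f \<le> B" unfolding supn_def by (rule cSUP_least) (auto simp: assms)
qed

lemma supn_nonneg: "f \<in> linf \<Longrightarrow> 0 \<le> supn f"
  using linf_bound[of f 0] by (meson norm_ge_zero order_trans)

lemma const_linf: "(\<lambda>_. c) \<in> linf" "supn (\<lambda>_. c) = cmod c"
  using linfI[of "\<lambda>_. c" "cmod c"] linf_bound[of "\<lambda>_. c" 0] by auto

lemma linf_add: "f \<in> linf \<Longrightarrow> g \<in> linf \<Longrightarrow> (\<lambda>n. f n + g n) \<in> linf"
  by (rule linfI(1)[where B="supn f + supn g"])
     (meson add_mono linf_bound norm_triangle_ineq order_trans)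

lemma linf_smul: "f \<in> linf \<Longrightarrow> (\<lambda>n. c * f n) \<in> linf"
  by (rule linfI(1)[where B="cmod c * supn f"])
     (simp add: norm_mult linf_bound mult_left_mono)

lemma l1b_add: "m \<in> l1bidual \<Longrightarrow> f \<in> linf \<Longrightarrow> g \<in> linf \<Longrightarrow> m (\<lambda>n. f n + g n) = m f + m g"
  unfolding l1bidual_def by auto
lemma l1b_smul: "m \<in> l1bidual \<Longrightarrow> f \<in> linf \<Longrightarrow> m (\<lambda>n. c * f n) = c * m f"
  unfolding l1bidual_def by auto
lemma l1b_out: "m \<in> l1bidual \<Longrightarrow> f \<notin> linf \<Longrightarrow> m f = 0"
  unfolding l1bidual_def by auto
lemma l1b_zero: "m \<in> l1bidual \<Longrightarrow> m (\<lambda>n. 0) = 0"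
  using l1b_smul[of m "\<lambda>n. 0" 0] const_linf by auto

lemma l1b_bdd: assumes "m \<in> l1bidual"
  shows "bdd_above ((\<lambda>f. cmod (m f)) ` {f\<in>linf. supn f \<le> 1})"
proof -
  obtain K where K: "\<forall>f\<in>linf. cmod (m f) \<le> K * supn f" using assms unfolding l1bidual_def by auto
  have "cmod (m f) \<le> \<bar>K\<bar>" if "f \<in> linf" "supn f \<le> 1" for f
  proof -
    have "K * supn f \<le> \<bar>K\<bar> * supn f" using supn_nonneg[OF that(1)]
      by (simp add: mult_right_mono)
    also have "\<dots> \<le> \<bar>K\<bar>" using that(2) by (simp add: mult_left_le)
    finally show ?thesis using K that by force
  qed
  then show ?thesis unfolding bdd_above_def by blast
qed

lemma bdnorm_ge: "m \<in> l1bidual \<Longrightarrow> f \<in> linf \<Longrightarrow> supn f \<le> 1 \<Longrightarrow> cmod (m f) \<le> bdnorm m"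
  unfolding bdnorm_def by (rule cSUP_upper) (auto intro: l1b_bdd)

lemma bdnorm_le: assumes "\<And>f. f \<in> linf \<Longrightarrow> supn f \<le> 1 \<Longrightarrow> cmod (m f) \<le> B"
  shows "bdnorm m \<le> B"
  unfolding bdnorm_def
proof (rule cSUP_least)
  show "{f \<in> linf. supn f \<le> 1} \<noteq> {}" using const_linf[of 0] by force
qed (use assms in auto)

lemma bdnorm_bound: assumes m: "m \<in> l1bidual" and f: "f \<in> linf"
  shows "cmod (m f) \<le> bdnorm m * supn f"
proof (cases "supn f = 0")
  case True
  then have "f = (\<lambda>n. 0 * f n)" using linf_bound[OF f] by (auto intro!: ext)
  then have "m f = 0" using l1b_smul[OF m f, of 0] by simp
  then show ?thesis using True by simp
next
  case False
  then have s: "supn f > 0" using supn_nonneg[OF f] by simp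
  define g where "g = (\<lambda>n. (1 / supn f) * f n)"
  have g: "g \<in> linf" unfolding g_def by (rule linf_smul[OF f])
  have "supn g \<le> 1" unfolding g_def
    by (rule linfI(2)) (use s linf_bound[OF f] in \<open>auto simp: norm_mult norm_divide field_simps\<close>)
  then have "cmod (m g) \<le> bdnorm m" using bdnorm_ge[OF m g] by simp
  moreover have "m g = (1 / supn f) * m f" unfolding g_def by (rule l1b_smul[OF m f])
  ultimately have "cmod (m f) / supn f \<le> bdnorm m" using s by (simp add: norm_mult norm_divide)
  then show ?thesis using s by (simp add: field_simps)
qed

lemma bdnorm_nonneg: "m \<in> l1bidual \<Longrightarrow> 0 \<le> bdnorm m"
proof -
  assume m: "m \<in> l1bidual"
  have "cmod (m (\<lambda>_. 1)) \<le> bdnorm m" using bdnorm_ge[OF m, of "\<lambda>_. 1"] const_linf[of 1] by simp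
  then show ?thesis by (meson norm_ge_zero order_trans)
qed

lemma l1bidualI:
  assumes "\<And>f g. f \<in> linf \<Longrightarrow> g \<in> linf \<Longrightarrow> m (\<lambda>n. f n + g n) = m f + m g"
    "\<And>c f. f \<in> linf \<Longrightarrow> m (\<lambda>n. c * f n) = c * m f"
    "\<And>f. f \<in> linf \<Longrightarrow> cmod (m f) \<le> K * supn f"
    "\<And>f. f \<notin> linf \<Longrightarrow> m f = 0"
  shows "m \<in> l1bidual"
  unfolding l1bidual_def using assms by blast

lemma l1b_padd: assumes "m \<in> l1bidual" "n \<in> l1bidual"
  shows "(\<lambda>f. m f + n f) \<in> l1bidual" "bdnorm (\<lambda>f. m f + n f) \<le> bdnorm m + bdnorm n"
proof -
  have b: "cmod (m f + n f) \<le> (bdnorm m + bdnorm n) * supn f" if "f \<in> linf" for f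
    using bdnorm_bound[OF assms(1) that] bdnorm_bound[OF assms(2) that]
    using norm_triangle_ineq[of "m f" "n f"] by (simp add: distrib_right)
  show "(\<lambda>f. m f + n f) \<in> l1bidual"
    by (rule l1bidualI[OF _ _ b]) (use assms in \<open>auto simp: l1b_add l1b_smul l1b_out algebra_simps\<close>)
  show "bdnorm (\<lambda>f. m f + n f) \<le> bdnorm m + bdnorm n"
  proof (rule bdnorm_le)
    fix f assume f: "f \<in> linf" "supn f \<le> 1"
    have "(bdnorm m + bdnorm n) * supn f \<le> bdnorm m + bdnorm n"
      using f bdnorm_nonneg[OF assms(1)] bdnorm_nonneg[OF assms(2)] by (simp add: mult_left_le)
    then show "cmod (m f + n f) \<le> bdnorm m + bdnorm n" using b[OF f(1)] by linarith
  qed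
qed

lemma l1b_psmul: assumes "m \<in> l1bidual"
  shows "(\<lambda>f. c * m f) \<in> l1bidual"
proof (rule l1bidualI[where K="cmod c * bdnorm m"])
  fix f assume f: "f \<in> linf"
  show "cmod (c * m f) \<le> cmod c * bdnorm m * supn f"
    using bdnorm_bound[OF assms f] by (simp add: norm_mult mult.assoc mult_left_mono)
qed (use assms in \<open>auto simp: l1b_add l1b_smul l1b_out algebra_simps\<close>)

lemma l1b_Z: "(\<lambda>f. 0) \<in> l1bidual"
  by (rule l1bidualI[where K=0]) auto



lemma arens_inner: assumes n: "n \<in> l1bidual" and f: "f \<in> linf"
  shows "(\<lambda>s. n (\<lambda>t. f (min t s))) \<in> linf" "supn (\<lambda>s. n (\<lambda>t. f (min t s))) \<le> bdnorm n * supn f"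
proof -
  have h: "(\<lambda>t. f (min t s)) \<in> linf" "supn (\<lambda>t. f (min t s)) \<le> supn f" for s
    using linfI[of "\<lambda>t. f (min t s)" "supn f"] linf_bound[OF f] by auto
  have "cmod (n (\<lambda>t. f (min t s))) \<le> bdnorm n * supn f" for s
    using bdnorm_bound[OF n h(1)[of s]] h(2)[of s] bdnorm_nonneg[OF n]
    by (meson mult_left_mono order_trans)
  then show "(\<lambda>s. n (\<lambda>t. f (min t s))) \<in> linf" "supn (\<lambda>s. n (\<lambda>t. f (min t s))) \<le> bdnorm n * supn f"
    using linfI[of "\<lambda>s. n (\<lambda>t. f (min t s))"] by auto
qed

lemma arens_bound: assumes m: "m \<in> l1bidual" and n: "n \<in> l1bidual" and f: "f \<in> linf"
  shows "cmod (arens m n f) \<le> bdnorm m * bdnorm n * supn f"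
proof -
  have "cmod (arens m n f) = cmod (m (\<lambda>s. n (\<lambda>t. f (min t s))))" using f by (simp add: arens_def)
  also have "\<dots> \<le> bdnorm m * supn (\<lambda>s. n (\<lambda>t. f (min t s)))"
    by (rule bdnorm_bound[OF m arens_inner(1)[OF n f]])
  also have "\<dots> \<le> bdnorm m * (bdnorm n * supn f)"
    by (rule mult_left_mono[OF arens_inner(2)[OF n f] bdnorm_nonneg[OF m]])
  finally show ?thesis by (simp add: mult.assoc)
qed

lemma arens_l1b: assumes m: "m \<in> l1bidual" and n: "n \<in> l1bidual"
  shows "arens m n \<in> l1bidual"
proof (rule l1bidualI[where K="bdnorm m * bdnorm n"])
  fix f g assume f: "f \<in> linf" and g: "g \<in> linf"
  have hf: "(\<lambda>t. f (min t s)) \<in> linf" for s using linfI[of "\<lambda>t. f (min t s)" "supn f"] linf_bound[OF f] by auto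
  have hg: "(\<lambda>t. g (min t s)) \<in> linf" for s using linfI[of "\<lambda>t. g (min t s)" "supn g"] linf_bound[OF g] by auto
  have e: "(\<lambda>s. n (\<lambda>t. f (min t s) + g (min t s))) = (\<lambda>s. n (\<lambda>t. f (min t s)) + n (\<lambda>t. g (min t s)))"
    using l1b_add[OF n hf hg] by auto
  show "arens m n (\<lambda>x. f x + g x) = arens m n f + arens m n g"
    using f g linf_add[OF f g] by (simp add: arens_def e l1b_add[OF m arens_inner(1)[OF n f] arens_inner(1)[OF n g]])
next
  fix c f assume f: "f \<in> linf"
  have hf: "(\<lambda>t. f (min t s)) \<in> linf" for s using linfI[of "\<lambda>t. f (min t s)" "supn f"] linf_bound[OF f] by auto
  have e: "(\<lambda>s. n (\<lambda>t. c * f (min t s))) = (\<lambda>s. c * n (\<lambda>t. f (min t s)))"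
    using l1b_smul[OF n hf] by auto
  show "arens m n (\<lambda>x. c * f x) = c * arens m n f"
    using f linf_smul[OF f] by (simp add: arens_def e l1b_smul[OF m arens_inner(1)[OF n f]])
qed (use arens_bound[OF m n] in \<open>auto simp: arens_def\<close>)

lemma arens_norm: assumes m: "m \<in> l1bidual" and n: "n \<in> l1bidual"
  shows "bdnorm (arens m n) \<le> bdnorm m * bdnorm n"
proof (rule bdnorm_le)
  fix f assume f: "f \<in> linf" "supn f \<le> 1"
  have "bdnorm m * bdnorm n * supn f \<le> bdnorm m * bdnorm n"
    using f bdnorm_nonneg[OF m] bdnorm_nonneg[OF n] by (simp add: mult_left_le)
  then show "cmod (arens m n f) \<le> bdnorm m * bdnorm n" using arens_bound[OF m n f(1)] by linarith
qed

lemma arens_addL: "arens (\<lambda>f. m f + m' f) n = (\<lambda>f. arens m n f + arens m' n f)"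
  by (auto simp: arens_def)
lemma arens_smulL: "arens (\<lambda>f. c * m f) n = (\<lambda>f. c * arens m n f)"
  by (auto simp: arens_def)
lemma arens_ZL: "arens (\<lambda>f. 0) n = (\<lambda>f. 0)"
  by (auto simp: arens_def)

lemma arens_addR: assumes m: "m \<in> l1bidual" and n: "n \<in> l1bidual" and n': "n' \<in> l1bidual"
  shows "arens m (\<lambda>f. n f + n' f) = (\<lambda>f. arens m n f + arens m n' f)"
proof
  fix f show "arens m (\<lambda>f. n f + n' f) f = arens m n f + arens m n' f"
  proof (cases "f \<in> linf")
    case True
    then show ?thesis
      using l1b_add[OF m arens_inner(1)[OF n True] arens_inner(1)[OF n' True]]
      by (simp add: arens_def)
  qed (simp add: arens_def)
qed

lemma arens_smulR: assumes m: "m \<in> l1bidual" and n: "n \<in> l1bidual"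
  shows "arens m (\<lambda>f. c * n f) = (\<lambda>f. c * arens m n f)"
proof
  fix f show "arens m (\<lambda>f. c * n f) f = c * arens m n f"
  proof (cases "f \<in> linf")
    case True
    then show ?thesis
      using l1b_smul[OF m arens_inner(1)[OF n True]]
      by (simp add: arens_def)
  qed (simp add: arens_def)
qed

lemma arens_ZR: assumes m: "m \<in> l1bidual" shows "arens m (\<lambda>f. 0) = (\<lambda>f. 0)"
  using l1b_zero[OF m] by (auto simp: arens_def)

definition lser :: "(nat \<Rightarrow> bd) \<Rightarrow> bd" where
  "lser m = (\<lambda>f. \<Sum>k. m k f)"

lemma lser: assumes m: "\<And>k. m k \<in> l1bidual" and s: "summable (\<lambda>k. bdnorm (m k))"
  shows "lser m \<in> l1bidual" "bdnorm (lser m) \<le> (\<Sum>k. bdnorm (m k))"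
proof -
  have sm: "summable (\<lambda>k. norm (m k f))" if f: "f \<in> linf" for f
    by (rule summable_comparison_test[where g="\<lambda>k. bdnorm (m k) * supn f"])
       (use bdnorm_bound[OF m f] summable_mult2[OF s] in auto)
  have b: "cmod (lser m f) \<le> (\<Sum>k. bdnorm (m k)) * supn f" if f: "f \<in> linf" for f
  proof -
    have "cmod (lser m f) \<le> (\<Sum>k. norm (m k f))" unfolding lser_def by (rule summable_norm[OF sm[OF f]])
    also have "\<dots> \<le> (\<Sum>k. bdnorm (m k) * supn f)"
      by (rule suminf_le) (use bdnorm_bound[OF m f] sm[OF f] summable_mult2[OF s] in auto)
    also have "\<dots> = (\<Sum>k. bdnorm (m k)) * supn f" by (rule suminf_mult2[OF s, symmetric])
    finally show ?thesis .
  qed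
  show "lser m \<in> l1bidual"
  proof (rule l1bidualI[OF _ _ b])
    fix f g assume f: "f \<in> linf" and g: "g \<in> linf"
    show "lser m (\<lambda>n. f n + g n) = lser m f + lser m g"
      unfolding lser_def using l1b_add[OF m f g]
      by (simp add: suminf_add[OF summable_norm_cancel[OF sm[OF f]] summable_norm_cancel[OF sm[OF g]]])
  next
    fix c f assume f: "f \<in> linf"
    show "lser m (\<lambda>n. c * f n) = c * lser m f"
      unfolding lser_def using l1b_smul[OF m f]
      by (simp add: suminf_mult[OF summable_norm_cancel[OF sm[OF f]]])
  qed (auto simp: lser_def l1b_out[OF m])
  show "bdnorm (lser m) \<le> (\<Sum>k. bdnorm (m k))"
  proof (rule bdnorm_le)
    fix f assume f: "f \<in> linf" "supn f \<le> 1"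
    have "0 \<le> (\<Sum>k. bdnorm (m k))" using bdnorm_nonneg[OF m] s by (simp add: suminf_nonneg)
    then have "(\<Sum>k. bdnorm (m k)) * supn f \<le> (\<Sum>k. bdnorm (m k))" using f by (simp add: mult_left_le)
    then show "cmod (lser m f) \<le> (\<Sum>k. bdnorm (m k))" using b[OF f(1)] by linarith
  qed
qed

lemma lser_summable: assumes m: "\<And>k. m k \<in> l1bidual" and s: "summable (\<lambda>k. bdnorm (m k))"
  shows "summable (\<lambda>k. m k f)"
proof (cases "f \<in> linf")
  case True
  show ?thesis
    by (rule summable_comparison_test[where g="\<lambda>k. bdnorm (m k) * supn f"])
       (use bdnorm_bound[OF m True] summable_mult2[OF s] in auto)
qed (simp add: l1b_out[OF m])



abbreviation "TC \<equiv> ba_carr T_alg"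

lemma T_carr[simp]: "u \<in> ba_carr T_alg \<longleftrightarrow> fst u \<in> l1bidual \<and> fst (snd u) \<in> l1bidual \<and> snd (snd u) \<in> l1bidual"
  by (cases u) (auto simp: T_alg_def)
lemma T_add[simp]: "ba_add T_alg u v = (\<lambda>f. fst u f + fst v f, \<lambda>f. fst (snd u) f + fst (snd v) f,
     \<lambda>f. snd (snd u) f + snd (snd v) f)"
  by (cases u, cases v) (auto simp: T_alg_def)
lemma T_smul[simp]: "ba_smul T_alg c u = (\<lambda>f. c * fst u f, \<lambda>f. c * fst (snd u) f, \<lambda>f. c * snd (snd u) f)"
  by (cases u) (auto simp: T_alg_def)
lemma T_mul[simp]: "ba_mul T_alg u v = (arens (fst u) (fst v),
     \<lambda>f. arens (fst u) (fst (snd v)) f + arens (fst (snd u)) (snd (snd v)) f, arens (snd (snd u)) (snd (snd v)))"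
  by (cases u, cases v) (auto simp: T_alg_def)
lemma T_nrm[simp]: "ba_nrm T_alg u = bdnorm (fst u) + bdnorm (fst (snd u)) + bdnorm (snd (snd u))"
  by (cases u) (auto simp: T_alg_def)

lemma T_add_carr: "u \<in> TC \<Longrightarrow> v \<in> TC \<Longrightarrow> ba_add T_alg u v \<in> TC"
  by (simp add: l1b_padd)
lemma T_smul_carr: "u \<in> TC \<Longrightarrow> ba_smul T_alg c u \<in> TC"
  by (simp add: l1b_psmul)
lemma T_mul_carr: "u \<in> TC \<Longrightarrow> v \<in> TC \<Longrightarrow> ba_mul T_alg u v \<in> TC"
  by (simp add: l1b_padd arens_l1b)
lemma T_nrm_nonneg: "u \<in> TC \<Longrightarrow> 0 \<le> ba_nrm T_alg u"
  by (simp add: bdnorm_nonneg)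

lemma T_mul_nrm: assumes u: "u \<in> TC" and v: "v \<in> TC"
  shows "ba_nrm T_alg (ba_mul T_alg u v) \<le> ba_nrm T_alg u * ba_nrm T_alg v"
proof -
  obtain a x b where uu: "u = (a, x, b)" by (cases u)
  obtain a' x' b' where vv: "v = (a', x', b')" by (cases v)
  have l: "a \<in> l1bidual" "x \<in> l1bidual" "b \<in> l1bidual" "a' \<in> l1bidual" "x' \<in> l1bidual" "b' \<in> l1bidual"
    using u v uu vv by auto
  note nn = bdnorm_nonneg[OF l(1)] bdnorm_nonneg[OF l(2)] bdnorm_nonneg[OF l(3)]
    bdnorm_nonneg[OF l(4)] bdnorm_nonneg[OF l(5)] bdnorm_nonneg[OF l(6)]
  have 1: "bdnorm (arens a a') \<le> bdnorm a * bdnorm a'" by (rule arens_norm) (use l in auto)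
  have 2: "bdnorm (\<lambda>f. arens a x' f + arens x b' f) \<le> bdnorm a * bdnorm x' + bdnorm x * bdnorm b'"
    using l1b_padd(2)[OF arens_l1b[OF l(1) l(5)] arens_l1b[OF l(2) l(6)]] arens_norm[OF l(1) l(5)]
      arens_norm[OF l(2) l(6)] by linarith
  have 3: "bdnorm (arens b b') \<le> bdnorm b * bdnorm b'" by (rule arens_norm) (use l in auto)
  have p: "0 \<le> bdnorm a * bdnorm b'" "0 \<le> bdnorm x * bdnorm a'" "0 \<le> bdnorm x * bdnorm x'"
    "0 \<le> bdnorm b * bdnorm a'" "0 \<le> bdnorm b * bdnorm x'"
    using nn by auto
  show ?thesis using 1 2 3 p uu vv by (simp add: algebra_simps)
qed

lemma T_mul_addL: "u \<in> TC \<Longrightarrow> w \<in> TC \<Longrightarrow> v \<in> TC \<Longrightarrow>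
   ba_mul T_alg (ba_add T_alg u w) v = ba_add T_alg (ba_mul T_alg u v) (ba_mul T_alg w v)"
  by (simp add: arens_addL algebra_simps)
lemma T_mul_addR: "u \<in> TC \<Longrightarrow> w \<in> TC \<Longrightarrow> v \<in> TC \<Longrightarrow>
   ba_mul T_alg u (ba_add T_alg v w) = ba_add T_alg (ba_mul T_alg u v) (ba_mul T_alg u w)"
  by (simp add: arens_addR algebra_simps)
lemma T_mul_smulL: "u \<in> TC \<Longrightarrow> v \<in> TC \<Longrightarrow>
   ba_mul T_alg (ba_smul T_alg c u) v = ba_smul T_alg c (ba_mul T_alg u v)"
  by (simp add: arens_smulL algebra_simps)
lemma T_mul_smulR: "u \<in> TC \<Longrightarrow> v \<in> TC \<Longrightarrow>
   ba_mul T_alg u (ba_smul T_alg c v) = ba_smul T_alg c (ba_mul T_alg u v)"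
  by (simp add: arens_smulR algebra_simps)

lemma lin_K: assumes "\<psi> \<in> lin_funcs T_alg"
  obtains K where "K \<ge> 0" "\<And>x. x \<in> TC \<Longrightarrow> cmod (\<psi> x) \<le> K * ba_nrm T_alg x"
proof -
  obtain K where K: "\<forall>x\<in>TC. cmod (\<psi> x) \<le> K * ba_nrm T_alg x" using assms unfolding lin_funcs_def by blast
  have "cmod (\<psi> x) \<le> max K 0 * ba_nrm T_alg x" if "x \<in> TC" for x
    using K that T_nrm_nonneg[OF that] by (meson max.cobounded1 mult_right_mono order_trans)
  then show ?thesis using that[of "max K 0"] by auto
qed

lemma lin_add: "\<psi> \<in> lin_funcs T_alg \<Longrightarrow> x \<in> TC \<Longrightarrow> y \<in> TC \<Longrightarrow> \<psi> (ba_add T_alg x y) = \<psi> x + \<psi> y"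
  unfolding lin_funcs_def by blast
lemma lin_smul: "\<psi> \<in> lin_funcs T_alg \<Longrightarrow> x \<in> TC \<Longrightarrow> \<psi> (ba_smul T_alg c x) = c * \<psi> x"
  unfolding lin_funcs_def by blast

lemma lin_bil: assumes psi: "\<psi> \<in> lin_funcs T_alg"
  shows "(\<lambda>x y. \<psi> (ba_mul T_alg x y)) \<in> bil_forms T_alg"
proof -
  obtain K where K: "K \<ge> 0" "\<And>x. x \<in> TC \<Longrightarrow> cmod (\<psi> x) \<le> K * ba_nrm T_alg x" using lin_K[OF psi] by blast
  have b: "cmod (\<psi> (ba_mul T_alg x y)) \<le> K * ba_nrm T_alg x * ba_nrm T_alg y" if "x \<in> TC" "y \<in> TC" for x y
    using K(2)[OF T_mul_carr[OF that]] mult_left_mono[OF T_mul_nrm[OF that] K(1)]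
    by (simp add: mult.assoc)
  have l: "\<psi> (ba_mul T_alg (ba_add T_alg x z) y) = \<psi> (ba_mul T_alg x y) + \<psi> (ba_mul T_alg z y) \<and>
        \<psi> (ba_mul T_alg x (ba_add T_alg y z)) = \<psi> (ba_mul T_alg x y) + \<psi> (ba_mul T_alg x z) \<and>
        \<psi> (ba_mul T_alg (ba_smul T_alg c x) y) = c * \<psi> (ba_mul T_alg x y) \<and>
        \<psi> (ba_mul T_alg x (ba_smul T_alg c y)) = c * \<psi> (ba_mul T_alg x y)"
    if xyz: "x \<in> TC" "y \<in> TC" "z \<in> TC" for x y z c
  proof -
    note E = T_mul_addL[OF xyz(1,3,2)] T_mul_addR[OF xyz(1,3,2)] T_mul_smulL[OF xyz(1,2)] T_mul_smulR[OF xyz(1,2)]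
    have m: "ba_mul T_alg x y \<in> TC" "ba_mul T_alg z y \<in> TC" "ba_mul T_alg x z \<in> TC"
      using T_mul_carr xyz by blast+
    show ?thesis
      unfolding E(1) E(2) E(3)[of c] E(4)[of c]
      using lin_add[OF psi m(1) m(2)] lin_add[OF psi m(1) m(3)] lin_smul[OF psi m(1)] by blast
  qed
  show ?thesis unfolding bil_forms_def
    using b l by blast
qed

lemma coordI: assumes f: "f \<in> linf" and sel: "\<And>u. u \<in> TC \<Longrightarrow> bdnorm (sel u) \<le> ba_nrm T_alg u \<and> sel u \<in> l1bidual"
  and lin: "\<And>x y c. x \<in> TC \<Longrightarrow> y \<in> TC \<Longrightarrow> sel (ba_add T_alg x y) f = sel x f + sel y f \<and>
      sel (ba_smul T_alg c x) f = c * sel x f"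
  shows "(\<lambda>u. sel u f) \<in> lin_funcs T_alg"
proof -
  have "cmod (sel u f) \<le> supn f * ba_nrm T_alg u" if "u \<in> TC" for u
  proof -
    have "cmod (sel u f) \<le> bdnorm (sel u) * supn f" using bdnorm_bound[OF _ f] sel[OF that] by blast
    also have "\<dots> \<le> ba_nrm T_alg u * supn f" using sel[OF that] supn_nonneg[OF f] by (simp add: mult_right_mono)
    finally show ?thesis by (simp add: mult.commute)
  qed
  then show ?thesis unfolding lin_funcs_def using lin by blast
qed

lemma coord1: "f \<in> linf \<Longrightarrow> (\<lambda>u. fst u f) \<in> lin_funcs T_alg"
  by (rule coordI) (auto simp del: T_carr, auto simp: bdnorm_nonneg)
lemma coord2: "f \<in> linf \<Longrightarrow> (\<lambda>u. fst (snd u) f) \<in> lin_funcs T_alg"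
  by (rule coordI[where sel="\<lambda>u. fst (snd u)"]) (auto simp del: T_carr, auto simp: bdnorm_nonneg)
lemma coord3: "f \<in> linf \<Longrightarrow> (\<lambda>u. snd (snd u) f) \<in> lin_funcs T_alg"
  by (rule coordI[where sel="\<lambda>u. snd (snd u)"]) (auto simp del: T_carr, auto simp: bdnorm_nonneg)



definition tser :: "(nat \<Rightarrow> bd \<times> bd \<times> bd) \<Rightarrow> bd \<times> bd \<times> bd" where
  "tser w = (lser (\<lambda>k. fst (w k)), lser (\<lambda>k. fst (snd (w k))), lser (\<lambda>k. snd (snd (w k))))"

lemma tser: assumes w: "\<And>k. w k \<in> TC" and s: "summable (\<lambda>k. ba_nrm T_alg (w k))"
  shows "tser w \<in> TC" "ba_nrm T_alg (tser w) \<le> (\<Sum>k. ba_nrm T_alg (w k))"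
    "summable (\<lambda>k. bdnorm (fst (w k)))" "summable (\<lambda>k. bdnorm (fst (snd (w k))))"
    "summable (\<lambda>k. bdnorm (snd (snd (w k))))"
proof -
  have l: "fst (w k) \<in> l1bidual" "fst (snd (w k)) \<in> l1bidual" "snd (snd (w k)) \<in> l1bidual" for k
    using w[of k] by auto
  note nn = bdnorm_nonneg[OF l(1)] bdnorm_nonneg[OF l(2)] bdnorm_nonneg[OF l(3)]
  show s1: "summable (\<lambda>k. bdnorm (fst (w k)))"
    by (rule summable_comparison_test[OF _ s]) (use nn in auto)
  show s2: "summable (\<lambda>k. bdnorm (fst (snd (w k))))"
    by (rule summable_comparison_test[OF _ s]) (use nn in auto)
  show s3: "summable (\<lambda>k. bdnorm (snd (snd (w k))))"
    by (rule summable_comparison_test[OF _ s]) (use nn in auto)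
  show "tser w \<in> TC" unfolding tser_def using lser(1) l s1 s2 s3 by simp
  have "ba_nrm T_alg (tser w) \<le> (\<Sum>k. bdnorm (fst (w k))) + (\<Sum>k. bdnorm (fst (snd (w k))))
     + (\<Sum>k. bdnorm (snd (snd (w k))))"
    unfolding tser_def using lser(2)[OF l(1) s1] lser(2)[OF l(2) s2] lser(2)[OF l(3) s3] by simp
  also have "\<dots> = (\<Sum>k. ba_nrm T_alg (w k))"
    using suminf_add[OF s1 s2] suminf_add[OF summable_add[OF s1 s2] s3] by simp
  finally show "ba_nrm T_alg (tser w) \<le> (\<Sum>k. ba_nrm T_alg (w k))" .
qed

lemma suminf_head: "summable f \<Longrightarrow> suminf f = f 0 + (\<Sum>n. f (Suc n))"
  for f :: "nat \<Rightarrow> complex"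
  using suminf_split_head[of f] by simp

lemma tser_split: assumes w: "\<And>k. w k \<in> TC" and s: "summable (\<lambda>k. ba_nrm T_alg (w k))"
  shows "tser w = ba_add T_alg (w 0) (tser (\<lambda>k. w (Suc k)))"
proof -
  have l: "fst (w k) \<in> l1bidual" "fst (snd (w k)) \<in> l1bidual" "snd (snd (w k)) \<in> l1bidual" for k
    using w[of k] by auto
  note ss = tser(3-5)[OF w s]
  show ?thesis unfolding tser_def lser_def
    using suminf_head[OF lser_summable[OF l(1) ss(1)]] suminf_head[OF lser_summable[OF l(2) ss(2)]]
      suminf_head[OF lser_summable[OF l(3) ss(3)]]
    by simp
qed

lemma tail_zero: "summable f \<Longrightarrow> (\<lambda>N. \<Sum>k. f (k + N)) \<longlonglongrightarrow> (0::real)"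
proof -
  assume s: "summable f"
  have "(\<lambda>N. suminf f - (\<Sum>i<N. f i)) \<longlonglongrightarrow> suminf f - suminf f"
    by (intro tendsto_diff tendsto_const summable_LIMSEQ[OF s])
  then show ?thesis using suminf_minus_initial_segment[OF s] by simp
qed

lemma tser_lin: assumes w: "\<And>k. w k \<in> TC" and s: "summable (\<lambda>k. ba_nrm T_alg (w k))"
  and psi: "\<psi> \<in> lin_funcs T_alg"
  shows "(\<lambda>k. \<psi> (w k)) sums \<psi> (tser w)"
proof -
  define D where "D N = tser (\<lambda>k. w (k + N))" for N
  have wN: "\<And>k. w (k + N) \<in> TC" for N using w by blast
  have sN: "summable (\<lambda>k. ba_nrm T_alg (w (k + N)))" for N
    using summable_ignore_initial_segment[OF s, of N] by (simp del: T_nrm)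
  have eq: "\<psi> (tser w) = (\<Sum>k<N. \<psi> (w k)) + \<psi> (D N)" for N
  proof (induction N)
    case 0 then show ?case by (simp add: D_def)
  next
    case (Suc N)
    have "D N = ba_add T_alg (w N) (D (Suc N))"
      unfolding D_def using tser_split[OF wN sN, of N] by simp
    then have "\<psi> (D N) = \<psi> (w N) + \<psi> (D (Suc N))"
      using lin_add[OF psi w tser(1)[OF wN sN, of "Suc N"]] by (simp add: D_def del: T_add T_carr)
    then show ?case using Suc by simp
  qed
  obtain K where K: "K \<ge> 0" "\<And>x. x \<in> TC \<Longrightarrow> cmod (\<psi> x) \<le> K * ba_nrm T_alg x" using lin_K[OF psi] by blast
  have bnd: "norm (\<psi> (D N)) \<le> K * (\<Sum>k. ba_nrm T_alg (w (k + N)))" for N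
    using K(2)[OF tser(1)[OF wN sN, of N]] mult_left_mono[OF tser(2)[OF wN sN, of N] K(1)] unfolding D_def
    by (simp del: T_nrm T_carr)
  have "(\<lambda>N. K * (\<Sum>k. ba_nrm T_alg (w (k + N)))) \<longlonglongrightarrow> 0"
    using tendsto_mult_right_zero[OF tail_zero[OF s]] by simp
  then have "(\<lambda>N. \<psi> (D N)) \<longlonglongrightarrow> 0"
    by (rule Lim_null_comparison[rotated]) (use bnd in auto)
  then have "(\<lambda>N. \<psi> (tser w) - \<psi> (D N)) \<longlonglongrightarrow> \<psi> (tser w) - 0"
    by (intro tendsto_diff tendsto_const)
  moreover have "(\<lambda>N. \<psi> (tser w) - \<psi> (D N)) = (\<lambda>N. \<Sum>k<N. \<psi> (w k))"
  proof
    fix N show "\<psi> (tser w) - \<psi> (D N) = (\<Sum>k<N. \<psi> (w k))" using eq[of N] by simp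
  qed
  ultimately show ?thesis unfolding sums_def by simp
qed

lemma tproj_prop: assumes u: "u \<in> ptens T_alg"
  shows "tproj T_alg u \<in> TC \<and> (\<forall>\<psi>\<in>lin_funcs T_alg. \<psi> (tproj T_alg u) = u (\<lambda>x y. \<psi> (ba_mul T_alg x y)))"
proof -
  obtain xs ys where tr: "tens_rep T_alg xs ys" and ue: "u = tens_of T_alg xs ys"
    using u unfolding ptens_def by blast
  have xy: "xs k \<in> TC" "ys k \<in> TC" for k using tr unfolding tens_rep_def by blast+
  have sxy: "summable (\<lambda>k. ba_nrm T_alg (xs k) * ba_nrm T_alg (ys k))" using tr unfolding tens_rep_def by blast
  define w where "w k = ba_mul T_alg (xs k) (ys k)" for k
  have w: "w k \<in> TC" for k unfolding w_def using T_mul_carr xy by blast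
  have s: "summable (\<lambda>k. ba_nrm T_alg (w k))"
    by (rule summable_comparison_test[OF _ sxy])
       (use T_mul_nrm[OF xy] T_nrm_nonneg[OF w] in \<open>auto simp: w_def simp del: T_nrm T_mul T_carr\<close>)
  define c where "c = tser w"
  have P: "\<psi> c = u (\<lambda>x y. \<psi> (ba_mul T_alg x y))" if psi: "\<psi> \<in> lin_funcs T_alg" for \<psi>
  proof -
    have "u (\<lambda>x y. \<psi> (ba_mul T_alg x y)) = (\<Sum>k. \<psi> (w k))"
      unfolding ue tens_of_def w_def using lin_bil[OF psi] by simp
    then show ?thesis unfolding c_def using sums_unique[OF tser_lin[OF w s psi]] by simp
  qed
  have cC: "c \<in> TC" unfolding c_def by (rule tser(1)[OF w s])
  have uniq: "c' = c" if c': "c' \<in> TC" "\<forall>\<psi>\<in>lin_funcs T_alg. \<psi> c' = u (\<lambda>x y. \<psi> (ba_mul T_alg x y))" for c'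
  proof -
    have "fst c' f = fst c f \<and> fst (snd c') f = fst (snd c) f \<and> snd (snd c') f = snd (snd c) f" for f
    proof (cases "f \<in> linf")
      case True
      then show ?thesis using c'(2) P coord1[OF True] coord2[OF True] coord3[OF True] by metis
    next
      case False
      then show ?thesis using c'(1) cC by (simp add: l1b_out)
    qed
    then show ?thesis by (simp add: prod_eq_iff fun_eq_iff)
  qed
  have "tproj T_alg u = c" unfolding tproj_def
    by (rule the_equality) (use cC P uniq in blast)+
  then show ?thesis using cC P by simp
qed



definition one :: "nat \<Rightarrow> complex" where "one = (\<lambda>_. 1)"
definition dd :: bd where "dd = (\<lambda>f. if f \<in> linf then f 0 else 0)"
definition ZZ :: bd where "ZZ = (\<lambda>f. 0)"

lemma one_linf: "one \<in> linf" "supn one = 1"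
  unfolding one_def using const_linf[of 1] by auto

lemma dd_l1b: "dd \<in> l1bidual"
proof (rule l1bidualI[where K=1])
  fix f assume f: "f \<in> linf" show "cmod (dd f) \<le> 1 * supn f" using linf_bound[OF f, of 0] f by (simp add: dd_def)
qed (auto simp: dd_def linf_add linf_smul)

lemma ZZ_l1b: "ZZ \<in> l1bidual" unfolding ZZ_def by (rule l1b_Z)

lemma min_linf: "f \<in> linf \<Longrightarrow> (\<lambda>t. f (min t s)) \<in> linf"
  using linfI[of "\<lambda>t. f (min t s)" "supn f"] linf_bound[of f] by auto

lemma arens_dd: "b \<in> l1bidual \<Longrightarrow> f \<in> linf \<Longrightarrow> arens dd b f = b (\<lambda>t. f 0)"
  using arens_inner(1)[of b f] by (simp add: arens_def dd_def)

lemma arens_dd_dd: "arens dd dd = dd"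
proof
  fix f show "arens dd dd f = dd f"
  proof (cases "f \<in> linf")
    case True
    then show ?thesis using arens_dd[OF dd_l1b True] const_linf by (simp add: dd_def)
  qed (simp add: arens_def dd_def)
qed

lemma const_eval: "m \<in> l1bidual \<Longrightarrow> m (\<lambda>s. c) = c * m one"
  using l1b_smul[of m one c] one_linf by (simp add: one_def)

lemma arens_one: "m \<in> l1bidual \<Longrightarrow> n \<in> l1bidual \<Longrightarrow> arens m n one = m one * n one"
  using one_linf const_eval[of m "n one"] by (simp add: arens_def one_def mult.commute)

lemma dd_one: "dd one = 1" using one_linf by (simp add: dd_def one_def)

definition pp where "pp = (dd, ZZ, ZZ)"
definition qq where "qq = (ZZ, ZZ, dd)"
definition rr where "rr = (ZZ, dd, ZZ)"

lemma pqr_carr: "pp \<in> TC" "qq \<in> TC" "rr \<in> TC"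
  by (auto simp: pp_def qq_def rr_def dd_l1b ZZ_l1b)

lemma mul_pr: "ba_mul T_alg pp rr = rr"
  using arens_ZR[OF dd_l1b] arens_dd_dd unfolding pp_def rr_def by (simp add: ZZ_def arens_ZL)
lemma mul_rq: "ba_mul T_alg rr qq = rr"
  using arens_ZR[OF dd_l1b] arens_dd_dd unfolding qq_def rr_def by (simp add: ZZ_def arens_ZL)

lemma tens_of_zero: assumes "tens_rep T_alg xs ys" "\<And>x y. x \<in> TC \<Longrightarrow> y \<in> TC \<Longrightarrow> F x y = 0"
  shows "tens_of T_alg xs ys F = 0"
  using assms unfolding tens_of_def tens_rep_def by (simp del: T_carr)

lemma bil_cong: assumes "\<And>x y. x \<in> TC \<Longrightarrow> y \<in> TC \<Longrightarrow> F x y = G x y"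
  shows "F \<in> bil_forms T_alg \<longleftrightarrow> G \<in> bil_forms T_alg"
proof -
  have "\<And>x y z c. x \<in> TC \<Longrightarrow> y \<in> TC \<Longrightarrow> z \<in> TC \<Longrightarrow>
     F (ba_add T_alg x z) y = G (ba_add T_alg x z) y \<and> F x (ba_add T_alg y z) = G x (ba_add T_alg y z) \<and>
     F (ba_smul T_alg c x) y = G (ba_smul T_alg c x) y \<and> F x (ba_smul T_alg c y) = G x (ba_smul T_alg c y) \<and>
     F x y = G x y \<and> F z y = G z y \<and> F x z = G x z"
    using assms T_add_carr T_smul_carr by blast
  then show ?thesis unfolding bil_forms_def by (simp del: T_carr T_add T_smul T_nrm)
qed

lemma tens_of_cong: assumes "tens_rep T_alg xs ys" "\<And>x y. x \<in> TC \<Longrightarrow> y \<in> TC \<Longrightarrow> F x y = G x y"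
  shows "tens_of T_alg xs ys F = tens_of T_alg xs ys G"
  using assms bil_cong[of F G] unfolding tens_of_def tens_rep_def by (simp del: T_carr)

definition phi where "phi = (\<lambda>(x::bd\<times>bd\<times>bd) (y::bd\<times>bd\<times>bd). fst (snd x) one * snd (snd y) one)"

lemma phi_bil: "phi \<in> bil_forms T_alg"
proof -
  have b: "cmod (m one) \<le> bdnorm m" if "m \<in> l1bidual" for m
    using bdnorm_bound[OF that one_linf(1)] one_linf(2) by simp
  have bnd: "cmod (phi x y) \<le> 1 * ba_nrm T_alg x * ba_nrm T_alg y" if "x \<in> TC" "y \<in> TC" for x y
  proof -
    have "cmod (phi x y) \<le> bdnorm (fst (snd x)) * bdnorm (snd (snd y))"
      unfolding phi_def norm_mult using that b
      by (simp add: mult_mono')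
    also have "\<dots> \<le> ba_nrm T_alg x * ba_nrm T_alg y"
      using that by (intro mult_mono) (auto simp: bdnorm_nonneg)
    finally show ?thesis by simp
  qed
  have lin: "\<forall>x\<in>TC. \<forall>y\<in>TC. \<forall>z\<in>TC. \<forall>c.
        phi (ba_add T_alg x z) y = phi x y + phi z y \<and>
        phi x (ba_add T_alg y z) = phi x y + phi x z \<and>
        phi (ba_smul T_alg c x) y = c * phi x y \<and>
        phi x (ba_smul T_alg c y) = c * phi x y"
    by (simp add: phi_def algebra_simps)
  show ?thesis unfolding bil_forms_def using lin bnd by blast
qed

lemma key: assumes rho: "bimod_morph T_alg \<rho>"
  shows "snd (snd (tproj T_alg (\<rho> qq))) one = 0"
proof -
  have pt: "\<rho> a \<in> ptens T_alg" if "a \<in> TC" for a using rho that unfolding bimod_morph_def by blast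
  have bm: "\<forall>a\<in>TC. \<forall>b\<in>TC. \<rho> (ba_mul T_alg a b) = tl_act T_alg a (\<rho> b) \<and> \<rho> (ba_mul T_alg b a) = tr_act T_alg (\<rho> b) a"
    using rho unfolding bimod_morph_def by blast
  have r1: "\<rho> rr = tr_act T_alg (\<rho> pp) rr"
    using bm[rule_format, OF pqr_carr(3) pqr_carr(1)] mul_pr by (simp only:)
  have r2: "\<rho> rr = tl_act T_alg rr (\<rho> qq)"
    using bm[rule_format, OF pqr_carr(3) pqr_carr(2)] mul_rq by (simp only:)
  obtain xs ys where t1: "tens_rep T_alg xs ys" "\<rho> pp = tens_of T_alg xs ys"
    using pt[OF pqr_carr(1)] unfolding ptens_def by blast
  obtain xs' ys' where t2: "tens_rep T_alg xs' ys'" "\<rho> qq = tens_of T_alg xs' ys'"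
    using pt[OF pqr_carr(2)] unfolding ptens_def by blast
  have A: "\<rho> rr phi = 0"
  proof -
    have "\<rho> rr phi = tens_of T_alg xs ys (\<lambda>x y. phi x (ba_mul T_alg y rr))"
      using r1 phi_bil t1 by (simp add: tr_act_def del: T_mul T_carr)
    also have "\<dots> = 0"
      by (rule tens_of_zero[OF t1(1)]) (simp add: phi_def rr_def arens_ZR ZZ_def)
    finally show ?thesis .
  qed
  have B: "\<rho> rr phi = \<rho> qq (\<lambda>x y. snd (snd (ba_mul T_alg x y)) one)"
  proof -
    have "\<rho> rr phi = tens_of T_alg xs' ys' (\<lambda>x y. phi (ba_mul T_alg rr x) y)"
      using r2 phi_bil t2 by (simp add: tl_act_def del: T_mul T_carr)
    also have "\<dots> = tens_of T_alg xs' ys' (\<lambda>x y. snd (snd (ba_mul T_alg x y)) one)"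
      by (rule tens_of_cong[OF t2(1)])
         (simp add: phi_def rr_def ZZ_def arens_ZL arens_one arens_dd one_linf dd_l1b dd_one)
    finally show ?thesis using t2 by simp
  qed
  have "snd (snd (tproj T_alg (\<rho> qq))) one = \<rho> qq (\<lambda>x y. snd (snd (ba_mul T_alg x y)) one)"
  proof -
    have "\<forall>\<psi>\<in>lin_funcs T_alg. \<psi> (tproj T_alg (\<rho> qq)) = \<rho> qq (\<lambda>x y. \<psi> (ba_mul T_alg x y))"
      using tproj_prop[OF pt[OF pqr_carr(2)]] by blast
    from bspec[OF this coord3[OF one_linf(1)]] show ?thesis by simp
  qed
  then show ?thesis using A B by simp
qed

lemma key2: assumes rho: "bimod_morph T_alg \<rho>"
  shows "1 \<le> ba_nrm T_alg (ba_add T_alg (tproj T_alg (\<rho> qq)) (ba_smul T_alg (-1) qq))"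
proof -
  have pt: "\<rho> qq \<in> ptens T_alg" using rho pqr_carr unfolding bimod_morph_def by blast
  define c where "c = tproj T_alg (\<rho> qq)"
  have cC: "c \<in> TC" using tproj_prop[OF pt] c_def by blast
  have c0: "snd (snd c) one = 0" using key[OF rho] c_def by simp
  have v: "ba_add T_alg c (ba_smul T_alg (-1) qq) \<in> TC" using cC pqr_carr T_add_carr T_smul_carr by blast
  define m where "m = snd (snd (ba_add T_alg c (ba_smul T_alg (-1) qq)))"
  have ml: "m \<in> l1bidual" using v m_def by simp
  have "m one = -1" unfolding m_def using c0 one_linf by (simp add: qq_def dd_def one_def)
  then have "1 \<le> bdnorm m" using bdnorm_ge[OF ml one_linf(1)] one_linf(2) by simp
  moreover have "0 \<le> bdnorm (fst (ba_add T_alg c (ba_smul T_alg (-1) qq)))"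
    "0 \<le> bdnorm (fst (snd (ba_add T_alg c (ba_smul T_alg (-1) qq))))"
    using v[unfolded T_carr] bdnorm_nonneg by blast+
  ultimately show ?thesis unfolding m_def c_def T_nrm by linarith
qed

theorem mainTheorem9:
  shows "\<not> approx_biprojective T_alg"
proof
  assume "approx_biprojective T_alg"
  then obtain F :: "((bd\<times>bd\<times>bd) \<Rightarrow> (((bd\<times>bd\<times>bd) \<Rightarrow> (bd\<times>bd\<times>bd) \<Rightarrow> complex) \<Rightarrow> complex)) filter"
    where F: "F \<noteq> bot" "eventually (bimod_morph T_alg) F"
    "\<And>b. b \<in> TC \<Longrightarrow> ((\<lambda>\<rho>. ba_nrm T_alg (ba_add T_alg (tproj T_alg (\<rho> b)) (ba_smul T_alg (-1) b))) \<longlongrightarrow> 0) F"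
    unfolding approx_biprojective_def by blast
  have "eventually (\<lambda>\<rho>. ba_nrm T_alg (ba_add T_alg (tproj T_alg (\<rho> qq)) (ba_smul T_alg (-1) qq)) < 1) F"
    using order_tendstoD(2)[OF F(3)[OF pqr_carr(2)], of 1] by simp
  with F(2) have "eventually (\<lambda>\<rho>. False) F"
    by eventually_elim (use key2 in fastforce)
  then show False using F(1) by (simp add: eventually_False)
qed

end
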